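(* The MacMahon function $M(z)=\prod_{j=1}^\infty\frac{1}{(1-z^j)^j}$, $|z|<1$, belongs to $\mathcal{K}$ (with radius of convergence $1$) and is Gaussian.
   Context: The class $\mathcal{K}$ consists of non-constant power series $f(z)=\sum_{n\ge0}a_nz^n$ with radius of convergence $R\in(0,+\infty]$, with $a_n\ge 0$ for all $n$ and $a_0>0$. For $t\in(0,R)$, $X_t$ is the random variable with $\mathbf{P}(X_t=n)=a_nt^n/f(t)$, $n\ge0$. With $m_f(t)=\mathbf{E}(X_t)$, $\sigma_f^2(t)=\mathbf{V}(X_t)>0$ and $\breve{X}_t=(X_t-m_f(t))/\sigma_f(t)$, $f$ is called Gaussian if $\breve{X}_t$ converges in distribution to a standard normal random variable as $t\uparrow R$. *)

theory Defs
  imports "HOL-Probability.Probability"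
begin

definition ps_val :: "(nat \<Rightarrow> real) \<Rightarrow> real \<Rightarrow> real" where
  "ps_val a t = (\<Sum>n. a n * t ^ n)"

definition in_class_K :: "(nat \<Rightarrow> real) \<Rightarrow> bool" where
  "in_class_K a \<longleftrightarrow> (\<forall>n. a n \<ge> 0) \<and> a 0 > 0 \<and> (\<exists>n>0. a n \<noteq> 0)
     \<and> conv_radius a > 0"

text \<open>Mean and variance of X_t, where P(X_t = n) = a_n t^n / f(t).\<close>
definition khin_mean :: "(nat \<Rightarrow> real) \<Rightarrow> real \<Rightarrow> real" where
  "khin_mean a t = (\<Sum>n. real n * (a n * t ^ n / ps_val a t))"

definition khin_var :: "(nat \<Rightarrow> real) \<Rightarrow> real \<Rightarrow> real" where
  "khin_var a t = (\<Sum>n. (real n - khin_mean a t)\<^sup>2 * (a n * t ^ n / ps_val a t))"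

definition khin_norm_cdf :: "(nat \<Rightarrow> real) \<Rightarrow> real \<Rightarrow> real \<Rightarrow> real" where
  "khin_norm_cdf a t x =
     (\<Sum>n. if (real n - khin_mean a t) / sqrt (khin_var a t) \<le> x
           then a n * t ^ n / ps_val a t else 0)"

definition std_normal_cdf :: "real \<Rightarrow> real" where
  "std_normal_cdf x = (LBINT y:{..x}. std_normal_density y)"

definition to_radius :: "(nat \<Rightarrow> real) \<Rightarrow> real filter" where
  "to_radius a = (if conv_radius a = \<infinity> then at_top
                  else at_left (real_of_ereal (conv_radius a)))"

text \<open>Gaussian: the normalized X_t converges in distribution to N(0,1) as t \<up> R.
  Since the normal cdf is continuous everywhere, this is convergence of the
  distribution functions at every point.\<close>
definition gaussian :: "(nat \<Rightarrow> real) \<Rightarrow> bool" where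
  "gaussian a \<longleftrightarrow> in_class_K a \<and>
     (\<forall>x. ((\<lambda>t. khin_norm_cdf a t x) \<longlongrightarrow> std_normal_cdf x) (to_radius a))"

definition macmahon :: "complex \<Rightarrow> complex" where
  "macmahon z = (\<Prod>j. inverse ((1 - z ^ Suc j) ^ Suc j))"

end

theory Submission
  imports Defs "HOL-Complex_Analysis.Complex_Analysis" "HOL-Real_Asymp.Real_Asymp"
begin
lemma choose_series:
  fixes t :: real
  assumes "0 \<le> t" "t < 1"
  shows "(\<lambda>n. real ((n + k) choose k) * t ^ n) sums (1 / (1 - t) ^ Suc k)"
proof (induction k)
  case 0
  then show ?case using geometric_sums[of t] assms by simp
next
  case (Suc k)
  have g: "(\<lambda>n. t ^ n) sums (1 / (1 - t))" using geometric_sums[of t] assms by simp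
  have s1: "summable (\<lambda>n. norm (real ((n + k) choose k) * t ^ n))"
    using Suc.IH assms by (simp add: sums_iff)
  have s2: "summable (\<lambda>n. norm (t ^ n))"
    using g assms by (simp add: sums_iff)
  from Cauchy_product_sums[OF s1 s2]
  have "(\<lambda>n. \<Sum>i\<le>n. real ((i + k) choose k) * t ^ i * t ^ (n - i)) sums
         ((1 / (1 - t) ^ Suc k) * (1 / (1 - t)))"
    using Suc.IH g by (simp add: sums_iff)
  moreover have "(\<Sum>i\<le>n. real ((i + k) choose k) * t ^ i * t ^ (n - i)) =
      real ((n + Suc k) choose Suc k) * t ^ n" for n
  proof -
    have "(\<Sum>i\<le>n. real ((i + k) choose k) * t ^ i * t ^ (n - i)) =
          (\<Sum>i\<le>n. real ((k + i) choose i) * t ^ n)"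
    proof (intro sum.cong refl)
      fix i assume "i \<in> {..n}"
      hence i: "i \<le> n" by simp
      have "t ^ i * t ^ (n - i) = t ^ n" using i by (simp add: power_add[symmetric])
      moreover have "(i + k) choose k = (k + i) choose i"
        using binomial_symmetric[of k "i + k"] by (simp add: add.commute)
      ultimately show "real ((i + k) choose k) * t ^ i * t ^ (n - i) = real ((k + i) choose i) * t ^ n"
        by (simp add: mult.assoc)
    qed
    also have "\<dots> = real (\<Sum>i\<le>n. (k + i) choose i) * t ^ n"
      by (simp add: sum_distrib_right)
    also have "(\<Sum>i\<le>n. (k + i) choose i) = Suc (k + n) choose n"
      by (rule sum_choose_lower)
    also have "Suc (k + n) choose n = (n + Suc k) choose Suc k"
      by (metis add_Suc_right add.commute binomial_symmetric le_add2 add_diff_cancel_left')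
    finally show ?thesis .
  qed
  ultimately show ?case by (simp add: field_simps power_Suc)
qed

lemma mult_n_summable:
  fixes b :: "nat \<Rightarrow> real"
  assumes "\<And>x::real. \<bar>x\<bar> < 1 \<Longrightarrow> summable (\<lambda>n. b n * x ^ n)" "\<bar>x\<bar> < 1"
  shows "summable (\<lambda>n. (real n * b n) * x ^ n)"
proof -
  have "summable (\<lambda>n. diffs b n * x ^ n)"
    by (rule termdiff_converges[of x 1]) (use assms in auto)
  hence "summable (\<lambda>n. x * (diffs b n * x ^ n))" by (rule summable_mult)
  hence "summable (\<lambda>n. (real (Suc n) * b (Suc n)) * x ^ (Suc n))"
    by (simp add: diffs_def algebra_simps)
  thus ?thesis by (subst summable_Suc_iff[symmetric]) 
qed

lemma mult_n_sums:
  fixes b :: "nat \<Rightarrow> real"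
  assumes "\<And>x::real. \<bar>x\<bar> < 1 \<Longrightarrow> summable (\<lambda>n. b n * x ^ n)" "\<bar>x\<bar> < 1"
  shows "x * (\<Sum>n. diffs b n * x ^ n) = (\<Sum>n. (real n * b n) * x ^ n)"
proof -
  have "summable (\<lambda>n. diffs b n * x ^ n)"
    by (rule termdiff_converges[of x 1]) (use assms in auto)
  hence "(\<lambda>n. x * (diffs b n * x ^ n)) sums (x * (\<Sum>n. diffs b n * x ^ n))"
    by (intro sums_mult summable_sums)
  hence "(\<lambda>n. (real (Suc n) * b (Suc n)) * x ^ (Suc n)) sums (x * (\<Sum>n. diffs b n * x ^ n))"
    by (simp add: diffs_def algebra_simps)
  hence "(\<lambda>n. (real n * b n) * x ^ n) sums (x * (\<Sum>n. diffs b n * x ^ n))"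
    by (subst (asm) sums_Suc_iff) simp
  thus ?thesis by (simp add: sums_iff)
qed

lemma pow_n_summable:
  fixes x :: real
  assumes "\<bar>x\<bar> < 1"
  shows "summable (\<lambda>n. real n ^ j * x ^ n)"
  using assms
proof (induction j arbitrary: x)
  case 0
  then show ?case by (simp add: summable_geometric)
next
  case (Suc j)
  from mult_n_summable[of "\<lambda>n. real n ^ j", OF Suc.IH Suc.prems] show ?case
    by (simp add: algebra_simps)
qed

definition cc :: "nat \<Rightarrow> real" where
  "cc n = real n * (\<Sum>k\<in>{k. Suc k dvd n \<and> 0 < n}. 1 / (real (Suc k))^2)"

lemma cc_set_sub: "{k. Suc k dvd n \<and> 0 < n} \<subseteq> {..<n}"
  by (auto dest: dvd_imp_le)

lemma cc_set_fin: "finite {k. Suc k dvd n \<and> 0 < n}"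
  using cc_set_sub finite_subset by blast

lemma inv_sq_sum: "(\<Sum>k<n. 1 / (real (Suc k))^2) \<le> 2 - 2 / real (Suc n)"
proof (induction n)
  case 0 then show ?case by simp
next
  case (Suc n)
  have e: "2 / real (Suc n) - 2 / real (Suc (Suc n)) = 2 / (real (Suc n) * real (Suc (Suc n)))"
    by (simp add: field_simps)
  have "1 / (real (Suc n))^2 \<le> 2 / (real (Suc n) * real (Suc (Suc n)))"
    by (simp add: divide_simps power2_eq_square)
  hence "1 / (real (Suc n))^2 \<le> 2 / real (Suc n) - 2 / real (Suc (Suc n))" using e by simp
  with Suc show ?case by simp
qed

lemma cc_0 [simp]: "cc 0 = 0" by (simp add: cc_def)

lemma cc_nonneg: "cc n \<ge> 0"
  unfolding cc_def by (intro mult_nonneg_nonneg sum_nonneg) auto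

lemma cc_lower: assumes "n \<ge> 1" shows "real n \<le> cc n"
proof -
  have "1 \<le> (\<Sum>k\<in>{k. Suc k dvd n \<and> 0 < n}. 1 / (real (Suc k))^2)"
  proof -
    have "(\<Sum>k\<in>{0}. 1 / (real (Suc k))^2) \<le> (\<Sum>k\<in>{k. Suc k dvd n \<and> 0 < n}. 1 / (real (Suc k))^2)"
      by (rule sum_mono2[OF cc_set_fin]) (use assms in auto)
    thus ?thesis by simp
  qed
  thus ?thesis unfolding cc_def using assms by (simp add: mult_le_cancel_left1)
qed

lemma cc_upper: "cc n \<le> 2 * real n"
proof -
  have "(\<Sum>k\<in>{k. Suc k dvd n \<and> 0 < n}. 1 / (real (Suc k))^2) \<le> (\<Sum>k<n. 1 / (real (Suc k))^2)"
    by (rule sum_mono2[OF _ cc_set_sub]) auto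
  also have "\<dots> \<le> 2" using inv_sq_sum[of n] by (smt (verit) divide_nonneg_nonneg of_nat_0_le_iff)
  finally have "(\<Sum>k\<in>{k. Suc k dvd n \<and> 0 < n}. 1 / (real (Suc k))^2) \<le> 2" .
  hence "real n * (\<Sum>k\<in>{k. Suc k dvd n \<and> 0 < n}. 1 / (real (Suc k))^2) \<le> real n * 2"
    by (intro mult_left_mono) auto
  thus ?thesis unfolding cc_def by (simp add: mult.commute)
qed

lemma cc_pow_summable:
  fixes x :: real assumes "\<bar>x\<bar> < 1"
  shows "summable (\<lambda>n. real n ^ j * cc n * x ^ n)"
proof (rule summable_comparison_test[OF _ summable_mult[OF pow_n_summable[of "\<bar>x\<bar>" "Suc j"], of 2]])
  show "\<exists>N. \<forall>n\<ge>N. norm (real n ^ j * cc n * x ^ n) \<le> 2 * (real n ^ Suc j * \<bar>x\<bar> ^ n)"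
  proof (intro exI allI impI)
    fix n :: nat
    have "norm (real n ^ j * cc n * x ^ n) = real n ^ j * cc n * \<bar>x\<bar> ^ n"
      using cc_nonneg[of n] by (simp add: abs_mult power_abs)
    also have "\<dots> \<le> real n ^ j * (2 * real n) * \<bar>x\<bar> ^ n"
      by (intro mult_right_mono mult_left_mono cc_upper) auto
    finally show "norm (real n ^ j * cc n * x ^ n) \<le> 2 * (real n ^ Suc j * \<bar>x\<bar> ^ n)"
      by (simp add: algebra_simps)
  qed
qed (use assms in auto)

definition cC :: "complex fps" where "cC = Abs_fps (\<lambda>n. complex_of_real (cc n))"

definition gg :: "complex \<Rightarrow> nat \<times> nat \<Rightarrow> complex" where
  "gg z = (\<lambda>(j,k). complex_of_real (real (Suc j) / real (Suc k)) * z ^ (Suc j * Suc k))"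

definition ll :: "complex \<Rightarrow> nat \<Rightarrow> complex" where
  "ll z j = - of_nat (Suc j) * Ln (1 - z ^ Suc j)"

lemma norm_gg_le:
  "norm (gg z (j,k)) \<le> real (Suc j) * (norm z ^ Suc j) ^ Suc k"
proof -
  have "norm (gg z (j,k)) = \<bar>real (Suc j) / real (Suc k)\<bar> * norm z ^ (Suc j * Suc k)"
    by (simp only: gg_def case_prod_conv norm_mult norm_of_real norm_power)
  also have "\<dots> = real (Suc j) / real (Suc k) * (norm z ^ Suc j) ^ Suc k"
    by (simp only: power_mult abs_of_nonneg[of "real (Suc j) / real (Suc k)"] divide_nonneg_nonneg of_nat_0_le_iff)
  also have "\<dots> \<le> real (Suc j) * (norm z ^ Suc j) ^ Suc k"
    by (intro mult_right_mono) (auto simp: field_simps)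
  finally show ?thesis .
qed

lemma q_props:
  assumes "norm z < 1"
  shows "0 \<le> norm z ^ Suc j" "norm z ^ Suc j < 1" "norm z ^ Suc j \<le> norm z"
proof -
  show "0 \<le> norm z ^ Suc j" by simp
  show *: "norm z ^ Suc j \<le> norm z" using assms power_decreasing[of 1 "Suc j" "norm z"] by simp
  show "norm z ^ Suc j < 1" using * assms by linarith
qed

lemma geom_Suc_sums:
  fixes q :: real assumes "0 \<le> q" "q < 1"
  shows "(\<lambda>k. q ^ Suc k) sums (q / (1 - q))"
  using sums_mult[OF geometric_sums[of q], of q] assms by (simp add: field_simps)

lemma gg_inner_summable:
  assumes "norm z < 1"
  shows "summable (\<lambda>k. norm (gg z (j,k)))"
proof (rule summable_comparison_test[OF _ summable_mult[OF sums_summable[OF geom_Suc_sums]]])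
  show "\<exists>N. \<forall>n\<ge>N. norm (norm (gg z (j, n))) \<le> real (Suc j) * (norm z ^ Suc j) ^ Suc n"
    using norm_gg_le by auto
qed (use q_props[OF assms] in auto)

lemma gg_inner_sum_le:
  assumes "norm z < 1"
  shows "(\<Sum>k. norm (gg z (j,k))) \<le> real (Suc j) * norm z ^ Suc j / (1 - norm z)"
proof -
  let ?q = "norm z ^ Suc j"
  note q = q_props[OF assms, of j]
  have gs: "(\<lambda>k. real (Suc j) * ?q ^ Suc k) sums (real (Suc j) * (?q / (1 - ?q)))"
    using sums_mult[OF geom_Suc_sums[OF q(1,2)]] .
  have "(\<Sum>k. norm (gg z (j,k))) \<le> real (Suc j) * (?q / (1 - ?q))"
    using suminf_le[OF norm_gg_le gg_inner_summable[OF assms] sums_summable[OF gs]] gs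
    by (simp add: sums_iff)
  also have "\<dots> \<le> real (Suc j) * (?q / (1 - norm z))"
    using q assms by (intro mult_left_mono divide_left_mono) auto
  finally show ?thesis by simp
qed

lemma gg_abs_summable:
  assumes "norm z < 1"
  shows "(\<lambda>x. norm (gg z x)) summable_on UNIV"
proof -
  have U: "(UNIV :: (nat \<times> nat) set) = Sigma UNIV (\<lambda>_. UNIV)" by auto
  have inner: "(\<lambda>k. norm (gg z (j, k))) summable_on UNIV" for j
    by (rule summable_nonneg_imp_summable_on[OF gg_inner_summable[OF assms]]) simp
  have eq: "infsum (\<lambda>k. norm (gg z (j, k))) UNIV = (\<Sum>k. norm (gg z (j,k)))" for j
    using sums_nonneg_imp_has_sum[OF summable_sums[OF gg_inner_summable[OF assms]]]
    by (simp add: has_sum_iff)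
  have bsum: "summable (\<lambda>j. real (Suc j) * norm z ^ Suc j / (1 - norm z))"
  proof -
    have "summable (\<lambda>j. real j ^ 1 * norm z ^ j)"
      by (rule pow_n_summable) (use assms in simp)
    hence "summable (\<lambda>j. real (Suc j) * norm z ^ Suc j)"
      by (subst summable_Suc_iff) simp
    thus ?thesis by (intro summable_divide)
  qed
  have "(\<lambda>j. real (Suc j) * norm z ^ Suc j / (1 - norm z)) summable_on UNIV"
    by (rule summable_nonneg_imp_summable_on[OF bsum]) (use assms in auto)
  hence "(\<lambda>j. norm (infsum (\<lambda>k. norm (gg z (j, k))) UNIV)) summable_on UNIV"
  proof (rule summable_on_comparison_test)
    fix j :: nat
    have "norm (infsum (\<lambda>k. norm (gg z (j, k))) UNIV) = (\<Sum>k. norm (gg z (j,k)))"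
      by (simp only: eq real_norm_def) (simp add: suminf_nonneg gg_inner_summable[OF assms])
    thus "norm (infsum (\<lambda>k. norm (gg z (j, k))) UNIV) \<le> real (Suc j) * norm z ^ Suc j / (1 - norm z)"
      using gg_inner_sum_le[OF assms, of j] by linarith
  qed auto
  hence "(\<lambda>x. norm (gg z x)) summable_on Sigma UNIV (\<lambda>_. UNIV)"
    using Infinite_Sum.abs_summable_on_Sigma_iff[where f="gg z" and A=UNIV and B="\<lambda>_. UNIV"] inner by auto
  thus ?thesis by simp
qed

lemma helper_neg: "(- a) * - (X / b) = (a / b) * (X :: complex)"
  by (simp add: field_simps)

lemma ln_term: "(-1) ^ Suc n / of_nat n * (- w) ^ n = - (w ^ n / of_nat n :: complex)"
proof -
  have m1: "((-1::complex) ^ n) * ((-1) ^ n) = 1" by (simp flip: power_mult_distrib)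
  have "(-1) ^ Suc n / of_nat n * (- w) ^ n = - (((-1::complex) ^ n) * ((-1) ^ n)) * (w ^ n / of_nat n)"
    by (simp only: power_minus[of w] power_Suc) (simp add: field_simps)
  thus ?thesis by (simp only: m1) simp
qed

lemma ll_has_sum:
  assumes "norm z < 1"
  shows "((\<lambda>k. gg z (j,k)) has_sum ll z j) UNIV"
proof (rule norm_summable_imp_has_sum[OF gg_inner_summable[OF assms]])
  let ?w = "z ^ Suc j"
  have w: "norm (- ?w) < 1" by (simp only: norm_minus_cancel norm_power) (rule q_props(2)[OF assms])
  have eqf: "(\<lambda>n. (-1) ^ Suc n / of_nat n * (- ?w) ^ n) = (\<lambda>n. - (?w ^ n / of_nat n))"
    by (intro ext ln_term)
  have "(\<lambda>n. - (?w ^ n / of_nat n)) sums Ln (1 + - ?w)"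
    using Ln_series[OF w] unfolding eqf .
  hence "(\<lambda>n. - (?w ^ n / of_nat n)) sums Ln (1 - ?w)" by simp
  hence "(\<lambda>n. - (?w ^ Suc n / of_nat (Suc n))) sums Ln (1 - ?w)"
    by (subst sums_Suc_iff) simp
  hence "(\<lambda>n. (- of_nat (Suc j)) * - (?w ^ Suc n / of_nat (Suc n))) sums (- of_nat (Suc j) * Ln (1 - ?w))"
    by (rule sums_mult)
  moreover have "(- of_nat (Suc j)) * - (?w ^ Suc n / of_nat (Suc n)) = gg z (j,n)" for n
  proof -
    have "(- of_nat (Suc j)) * - (?w ^ Suc n / of_nat (Suc n)) = (of_nat (Suc j) / of_nat (Suc n)) * ?w ^ Suc n"
      by (rule helper_neg)
    also have "?w ^ Suc n = z ^ (Suc j * Suc n)" by (rule power_mult[symmetric])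
    also have "of_nat (Suc j) / of_nat (Suc n) = (complex_of_real (real (Suc j) / real (Suc n)))"
      by (simp only: of_real_divide of_real_of_nat_eq)
    finally show ?thesis by (simp only: gg_def case_prod_conv power_mult)
  qed
  ultimately show "(\<lambda>k. gg z (j,k)) sums ll z j"
    unfolding ll_def by simp
qed

definition phi :: "nat \<times> nat \<Rightarrow> nat \<times> nat" where "phi = (\<lambda>(j,k). (Suc j * Suc k, k))"

lemma phi_bij: "bij_betw phi UNIV (Sigma UNIV (\<lambda>n. {k. Suc k dvd n \<and> 0 < n}))"
proof (rule bij_betw_byWitness[where f' = "\<lambda>(n,k). (n div Suc k - 1, k)"])
  show "\<forall>a\<in>UNIV. (\<lambda>(n,k). (n div Suc k - 1, k)) (phi a) = a"
  proof
    fix a :: "nat \<times> nat"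
    obtain j k where a: "a = (j,k)" by fastforce
    have "Suc j * Suc k div Suc k = Suc j" by (rule div_mult_self_is_m) simp
    thus "(\<lambda>(n,k). (n div Suc k - 1, k)) (phi a) = a" by (simp only: a phi_def case_prod_conv) simp
  qed
  show "\<forall>a'\<in>Sigma UNIV (\<lambda>n. {k. Suc k dvd n \<and> 0 < n}). phi ((\<lambda>(n,k). (n div Suc k - 1, k)) a') = a'"
  proof
    fix a' assume "a' \<in> Sigma UNIV (\<lambda>n. {k. Suc k dvd n \<and> 0 < n})"
    then obtain n k where a': "a' = (n,k)" "Suc k dvd n" "0 < n" by auto
    then obtain m where m: "n = Suc k * m" by (auto elim: dvdE)
    with a' have "m > 0" by (cases m) auto
    have d: "n div Suc k = m" unfolding m by (rule nonzero_mult_div_cancel_left) simp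
    have "Suc (m - 1) * Suc k = n" using \<open>m > 0\<close> m by (simp add: mult.commute)
    then show "phi ((\<lambda>(n,k). (n div Suc k - 1, k)) a') = a'"
      by (simp only: a'(1) d phi_def case_prod_conv)
  qed
  show "phi ` UNIV \<subseteq> Sigma UNIV (\<lambda>n. {k. Suc k dvd n \<and> 0 < n})"
  proof
    fix y assume "y \<in> phi ` UNIV"
    then obtain j k where y: "y = phi (j,k)" by auto
    have "Suc k dvd Suc j * Suc k" by (rule dvd_triv_right)
    thus "y \<in> Sigma UNIV (\<lambda>n. {k. Suc k dvd n \<and> 0 < n})"
      by (simp only: y phi_def case_prod_conv) simp
  qed
qed auto

lemma gg_phi: "gg z x = (\<lambda>(n,k). complex_of_real (real n / (real (Suc k))^2) * z ^ n) (phi x)"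
proof -
  obtain j k where x: "x = (j,k)" by fastforce
  have "real (Suc j * Suc k) / (real (Suc k))^2 = real (Suc j) / real (Suc k)"
    by (simp only: of_nat_mult power2_eq_square) (simp del: of_nat_Suc)
  thus ?thesis by (simp only: x gg_def phi_def case_prod_conv)
qed

lemma cc_sum_eq:
  "(\<Sum>k\<in>{k. Suc k dvd n \<and> 0 < n}. complex_of_real (real n / (real (Suc k))^2) * z ^ n) = complex_of_real (cc n) * z ^ n"
  unfolding cc_def by (simp add: sum_distrib_right sum_distrib_left divide_inverse)

lemma main_sums:
  assumes "norm z < 1"
  shows "ll z sums (\<Sum>\<^sub>\<infinity>x. gg z x)" "(\<lambda>n. complex_of_real (cc n) * z ^ n) sums (\<Sum>\<^sub>\<infinity>x. gg z x)"
proof -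
  let ?T = "\<Sum>\<^sub>\<infinity>x. gg z x"
  have "gg z summable_on UNIV"
    using gg_abs_summable[OF assms] by (rule abs_summable_summable)
  hence hs: "(gg z has_sum ?T) UNIV" by (simp add: has_sum_iff)
  hence "(gg z has_sum ?T) (Sigma UNIV (\<lambda>_. UNIV))" by simp
  from has_sum_Sigma'[OF this ll_has_sum[OF assms]]
  have "(ll z has_sum ?T) UNIV" by simp
  thus "ll z sums ?T" by (rule has_sum_imp_sums)
  let ?f = "\<lambda>(n,k). complex_of_real (real n / (real (Suc k))^2) * z ^ n"
  have "((\<lambda>x. ?f (phi x)) has_sum ?T) UNIV"
    using hs by (simp only: gg_phi[symmetric])
  hence "(?f has_sum ?T) (Sigma UNIV (\<lambda>n. {k. Suc k dvd n \<and> 0 < n}))"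
    by (subst (asm) has_sum_reindex_bij_betw[OF phi_bij])
  from has_sum_Sigma'[OF this has_sum_finite[OF cc_set_fin]]
  have "((\<lambda>n. complex_of_real (cc n) * z ^ n) has_sum ?T) UNIV"
    by (simp only: case_prod_conv cc_sum_eq)
  thus "(\<lambda>n. complex_of_real (cc n) * z ^ n) sums ?T" by (rule has_sum_imp_sums)
qed

lemma cC_nth [simp]: "cC $ n = complex_of_real (cc n)" by (simp add: cC_def)

lemma cC_radius: "fps_conv_radius cC \<ge> 1"
  unfolding fps_conv_radius_def
proof (rule conv_radius_geI_ex')
  fix r :: real assume r: "0 < r" "ereal r < 1"
  have "summable (\<lambda>n. real n ^ 0 * cc n * r ^ n)"
    by (rule cc_pow_summable) (use r in auto)
  hence "summable (\<lambda>n. complex_of_real (cc n * r ^ n))"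
    by (subst summable_of_real_iff) simp
  thus "summable (\<lambda>n. fps_nth cC n * complex_of_real r ^ n)"
    by simp
qed

definition Lc :: "complex \<Rightarrow> complex" where "Lc = eval_fps cC"

lemma Lc_sums: "norm z < 1 \<Longrightarrow> (\<lambda>n. complex_of_real (cc n) * z ^ n) sums Lc z"
  using main_sums(2)[of z] by (simp add: Lc_def eval_fps_def sums_iff)

lemma ll_sums_Lc: "norm z < 1 \<Longrightarrow> ll z sums Lc z"
  using main_sums[of z] Lc_sums[of z] sums_unique2 by metis

lemma exp_ll:
  assumes "norm z < 1"
  shows "exp (ll z j) = inverse ((1 - z ^ Suc j) ^ Suc j)"
proof -
  have "norm (z ^ Suc j) < 1" using q_props(2)[OF assms, of j] by (simp only: norm_power)
  hence y: "1 - z ^ Suc j \<noteq> 0" by auto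
  have "exp (ll z j) = exp (of_nat (Suc j) * - Ln (1 - z ^ Suc j))"
    unfolding ll_def by (simp only: mult_minus_left mult_minus_right)
  also have "\<dots> = exp (- Ln (1 - z ^ Suc j)) ^ Suc j" by (rule exp_of_nat_mult)
  also have "exp (- Ln (1 - z ^ Suc j)) = inverse (1 - z ^ Suc j)"
    using y by (simp add: exp_minus)
  finally show ?thesis by (simp add: power_inverse)
qed

lemma prod_Lc:
  assumes "norm z < 1"
  shows "(\<lambda>j. inverse ((1 - z ^ Suc j) ^ Suc j)) has_prod exp (Lc z)"
proof -
  have "raw_has_prod (\<lambda>i. exp (ll z i)) 0 (exp (Lc z))"
    by (rule sums_imp_has_prod_exp[OF ll_sums_Lc[OF assms]])
  hence "raw_has_prod (\<lambda>j. inverse ((1 - z ^ Suc j) ^ Suc j)) 0 (exp (Lc z))"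
    by (simp only: exp_ll[OF assms])
  thus ?thesis by (simp add: has_prod_def)
qed

lemma macmahon_eq: "norm z < 1 \<Longrightarrow> macmahon z = exp (Lc z)"
  unfolding macmahon_def using prod_Lc has_prod_unique by metis

definition E :: "complex fps" where "E = fps_exp 1 oo cC"

lemma Lc_holo: "Lc holomorphic_on eball 0 1"
  unfolding Lc_def by (rule holomorphic_on_eval_fps) (use cC_radius eball_mono in blast)

lemma E_exp: "(exp \<circ> Lc) has_fps_expansion E"
proof -
  have "fps_conv_radius cC > 0" using cC_radius
    by (metis ereal_less_eq(4) less_le_trans zero_less_one zero_ereal_def one_ereal_def ereal_less(2) ereal_less_eq(3))
  hence "Lc has_fps_expansion cC" unfolding Lc_def by (rule eval_fps_has_fps_expansion)
  from has_fps_expansion_compose[OF has_fps_expansion_exp1 this]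
  show ?thesis by (simp add: E_def)
qed

lemma E_sums: "norm z < 1 \<Longrightarrow> (\<lambda>n. E $ n * z ^ n) sums exp (Lc z)"
proof -
  assume z: "norm z < 1"
  have "(exp \<circ> Lc) holomorphic_on eball 0 1"
    unfolding o_def by (intro holomorphic_intros Lc_holo)
  from has_fps_expansion_imp_sums_complex[OF E_exp this] z
  show ?thesis by simp
qed

definition nnr :: "complex \<Rightarrow> bool" where "nnr z \<longleftrightarrow> z = complex_of_real (Re z) \<and> 0 \<le> Re z"

lemma nnr_of_real: "0 \<le> x \<Longrightarrow> nnr (complex_of_real x)" by (simp add: nnr_def)
lemma nnr_0: "nnr 0" by (simp add: nnr_def)
lemma nnr_add: "nnr x \<Longrightarrow> nnr y \<Longrightarrow> nnr (x + y)"
  unfolding nnr_def by (metis Re_complex_of_real add_nonneg_nonneg of_real_add plus_complex.sel(1))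
lemma nnr_mult: "nnr x \<Longrightarrow> nnr y \<Longrightarrow> nnr (x * y)"
  unfolding nnr_def by (metis Re_complex_of_real mult_nonneg_nonneg of_real_mult)
lemma nnr_sum: "(\<And>i. i \<in> A \<Longrightarrow> nnr (f i)) \<Longrightarrow> nnr (sum f A)"
  by (induction A rule: infinite_finite_induct) (auto intro: nnr_0 nnr_add)

lemma cC_pow_nnr: "nnr ((cC ^ i) $ n)"
proof (induction i arbitrary: n)
  case 0 then show ?case by (auto simp: nnr_def)
next
  case (Suc i)
  show ?case unfolding power_Suc fps_mult_nth
    by (intro nnr_sum nnr_mult Suc) (simp_all add: cc_nonneg nnr_of_real)
qed

lemma E_nth: "E $ n = (\<Sum>i=0..n. complex_of_real (1 / fact i) * (cC ^ i) $ n)"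
  unfolding E_def fps_compose_nth by (simp add: fps_exp_def)

lemma E_nnr: "nnr (E $ n)"
  unfolding E_nth by (intro nnr_sum nnr_mult nnr_of_real cC_pow_nnr) auto

definition aa :: "nat \<Rightarrow> real" where "aa n = Re (E $ n)"

lemma E_aa: "E $ n = complex_of_real (aa n)"
  using E_nnr[of n] by (simp add: nnr_def aa_def)

lemma aa_nonneg: "aa n \<ge> 0"
  using E_nnr[of n] by (simp add: nnr_def aa_def)

lemma aa_0: "aa 0 = 1"
  by (simp add: aa_def E_nth)

lemma aa_ge: assumes "n \<ge> 1" shows "cc n \<le> aa n"
proof -
  have "aa n = (\<Sum>i=0..n. Re (complex_of_real (1 / fact i) * (cC ^ i) $ n))"
    unfolding aa_def E_nth by (simp only: Re_sum)
  also have "\<dots> \<ge> Re (complex_of_real (1 / fact 1) * (cC ^ 1) $ n)"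
  proof (rule member_le_sum[of 1 "{0..n}"])
    fix i assume "i \<in> {0..n} - {1}"
    have "nnr (complex_of_real (1 / fact i) * (cC ^ i) $ n)"
      by (intro nnr_mult nnr_of_real cC_pow_nnr) auto
    thus "0 \<le> Re (complex_of_real (1 / fact i) * (cC ^ i) $ n)" by (simp add: nnr_def)
  qed (use assms in auto)
  finally show ?thesis by simp
qed

lemma aa_ge1: "n \<ge> 1 \<Longrightarrow> 1 \<le> aa n"
  using aa_ge[of n] cc_lower[of n] by linarith

lemma aa_sums: "norm z < 1 \<Longrightarrow> (\<lambda>n. complex_of_real (aa n) * z ^ n) sums macmahon z"
  using E_sums[of z] macmahon_eq[of z] by (simp add: E_aa)

lemma aa_radius: "conv_radius aa = 1"
proof (rule antisym)
  show "conv_radius aa \<ge> 1"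
  proof (rule conv_radius_geI_ex')
    fix r :: real assume r: "0 < r" "ereal r < 1"
    from E_sums[of "complex_of_real r"] r have "summable (\<lambda>n. E $ n * complex_of_real r ^ n)"
      by (auto simp: sums_iff)
    hence "summable (\<lambda>n. complex_of_real (aa n * r ^ n))" by (simp add: E_aa)
    thus "summable (\<lambda>n. aa n * of_real r ^ n)" by (subst (asm) summable_of_real_iff) simp
  qed
  show "conv_radius aa \<le> 1"
  proof -
    have "\<not> summable (\<lambda>n. aa n * 1 ^ n)"
    proof
      assume "summable (\<lambda>n. aa n * 1 ^ n)"
      hence "aa \<longlonglongrightarrow> 0" using summable_LIMSEQ_zero by force
      moreover have "\<exists>N. \<forall>n\<ge>N. 1 \<le> aa n" using aa_ge1 by (intro exI[of _ 1]) auto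
      ultimately have "1 \<le> (0::real)" by (rule LIMSEQ_le_const)
      thus False by simp
    qed
    from conv_radius_leI'[OF this] show ?thesis by (simp add: one_ereal_def)
  qed
qed

definition K :: "nat \<Rightarrow> real \<Rightarrow> real" where
  "K j t = (\<Sum>n. real n ^ j * cc n * t ^ n)"

lemma K_sums: "\<bar>t\<bar> < 1 \<Longrightarrow> (\<lambda>n. real n ^ j * cc n * t ^ n) sums K j t"
  unfolding K_def by (rule summable_sums[OF cc_pow_summable])

lemma K_nonneg: "0 \<le> t \<Longrightarrow> t < 1 \<Longrightarrow> 0 \<le> K j t"
  unfolding K_def by (intro suminf_nonneg cc_pow_summable) (auto intro!: mult_nonneg_nonneg cc_nonneg)

lemma aa_real_sums:
  assumes "\<bar>t\<bar> < 1"
  shows "(\<lambda>n. aa n * t ^ n) sums exp (K 0 t)"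
proof -
  have n: "norm (complex_of_real t) < 1" using assms by simp
  have "(\<lambda>n. complex_of_real (cc n * t ^ n)) sums complex_of_real (K 0 t)"
    using sums_of_real[OF K_sums[OF assms, of 0]] by simp
  moreover have "(\<lambda>n. complex_of_real (cc n * t ^ n)) sums Lc (complex_of_real t)"
    using Lc_sums[OF n] by simp
  ultimately have L: "Lc (complex_of_real t) = complex_of_real (K 0 t)" using sums_unique2 by metis
  have "(\<lambda>n. complex_of_real (aa n * t ^ n)) sums complex_of_real (exp (K 0 t))"
    using aa_sums[OF n] macmahon_eq[OF n] L by (simp add: exp_of_real)
  from sums_Re[OF this] show ?thesis by simp
qed

lemma aa_summable: "\<bar>t\<bar> < 1 \<Longrightarrow> summable (\<lambda>n. aa n * t ^ n)"
  using aa_real_sums sums_summable by blast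

lemma ps_val_eq: "\<bar>t\<bar> < 1 \<Longrightarrow> ps_val aa t = exp (K 0 t)"
  unfolding ps_val_def using aa_real_sums sums_unique by metis

lemma K_deriv:
  assumes "\<bar>t\<bar> < 1"
  shows "(K j has_real_derivative (\<Sum>n. diffs (\<lambda>n. real n ^ j * cc n) n * t ^ n)) (at t)"
    "t * (\<Sum>n. diffs (\<lambda>n. real n ^ j * cc n) n * t ^ n) = K (Suc j) t"
proof -
  have s: "\<And>x::real. \<bar>x\<bar> < 1 \<Longrightarrow> summable (\<lambda>n. real n ^ j * cc n * x ^ n)"
    by (rule cc_pow_summable)
  have "K j = (\<lambda>t. \<Sum>n. (real n ^ j * cc n) * t ^ n)" by (simp add: K_def fun_eq_iff)
  thus "(K j has_real_derivative (\<Sum>n. diffs (\<lambda>n. real n ^ j * cc n) n * t ^ n)) (at t)"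
    using termdiffs_strong'[of 1 "\<lambda>n. real n ^ j * cc n" t] s assms by simp
  have "t * (\<Sum>n. diffs (\<lambda>n. real n ^ j * cc n) n * t ^ n) = (\<Sum>n. (real n * (real n ^ j * cc n)) * t ^ n)"
    by (rule mult_n_sums[OF s assms])
  also have "\<dots> = K (Suc j) t" by (simp add: K_def mult.assoc)
  finally show "t * (\<Sum>n. diffs (\<lambda>n. real n ^ j * cc n) n * t ^ n) = K (Suc j) t" .
qed

lemma aa_mult_summable: "\<bar>x\<bar> < 1 \<Longrightarrow> summable (\<lambda>n. (real n * aa n) * x ^ n)"
  by (rule mult_n_summable[OF aa_summable])

lemma aa_mult2_summable: "\<bar>x\<bar> < 1 \<Longrightarrow> summable (\<lambda>n. (real n * (real n * aa n)) * x ^ n)"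
  by (rule mult_n_summable[OF aa_mult_summable])

lemma open_int: "open {-1<..<(1::real)}" by simp

lemma moment1:
  assumes "\<bar>t\<bar> < 1"
  shows "(\<Sum>n. (real n * aa n) * t ^ n) = exp (K 0 t) * K 1 t"
proof -
  have d1: "((\<lambda>t. \<Sum>n. aa n * t ^ n) has_real_derivative (\<Sum>n. diffs aa n * t ^ n)) (at t)"
    using termdiffs_strong'[of 1 aa t] aa_summable assms by simp
  have "((\<lambda>t. exp (K 0 t)) has_real_derivative (exp (K 0 t) * (\<Sum>n. diffs (\<lambda>n. real n ^ 0 * cc n) n * t ^ n))) (at t)"
    by (rule DERIV_fun_exp[OF K_deriv(1)[OF assms]])
  hence d2: "((\<lambda>t. \<Sum>n. aa n * t ^ n) has_real_derivative (exp (K 0 t) * (\<Sum>n. diffs (\<lambda>n. real n ^ 0 * cc n) n * t ^ n))) (at t)"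
    by (rule has_field_derivative_transform_within_open[OF _ open_int])
       (use assms in \<open>auto intro!: sums_unique aa_real_sums\<close>)
  have eq: "(\<Sum>n. diffs aa n * t ^ n) = exp (K 0 t) * (\<Sum>n. diffs (\<lambda>n. real n ^ 0 * cc n) n * t ^ n)"
    using DERIV_unique[OF d1 d2] .
  have "(\<Sum>n. (real n * aa n) * t ^ n) = t * (\<Sum>n. diffs aa n * t ^ n)"
    by (rule mult_n_sums[OF aa_summable assms, symmetric])
  also have "\<dots> = exp (K 0 t) * (t * (\<Sum>n. diffs (\<lambda>n. real n ^ 0 * cc n) n * t ^ n))"
    by (simp add: eq)
  also have "\<dots> = exp (K 0 t) * K 1 t" by (subst K_deriv(2)[OF assms]) simp
  finally show ?thesis .
qed

lemma moment2:
  assumes "\<bar>t\<bar> < 1"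
  shows "(\<Sum>n. (real n * (real n * aa n)) * t ^ n) = exp (K 0 t) * (K 1 t ^ 2 + K 2 t)"
proof -
  let ?D0 = "\<Sum>n. diffs (\<lambda>n. real n ^ 0 * cc n) n * t ^ n"
  let ?D1 = "\<Sum>n. diffs (\<lambda>n. real n ^ 1 * cc n) n * t ^ n"
  have d1: "((\<lambda>t. \<Sum>n. (real n * aa n) * t ^ n) has_real_derivative (\<Sum>n. diffs (\<lambda>n. real n * aa n) n * t ^ n)) (at t)"
    using termdiffs_strong'[of 1 "\<lambda>n. real n * aa n" t] aa_mult_summable assms by simp
  have "((\<lambda>t. exp (K 0 t) * K 1 t) has_real_derivative
          (exp (K 0 t) * ?D0 * K 1 t + ?D1 * exp (K 0 t))) (at t)"
    by (rule DERIV_mult[OF DERIV_fun_exp[OF K_deriv(1)[OF assms]] K_deriv(1)[OF assms]])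
  hence d2: "((\<lambda>t. \<Sum>n. (real n * aa n) * t ^ n) has_real_derivative
          (exp (K 0 t) * ?D0 * K 1 t + ?D1 * exp (K 0 t))) (at t)"
    by (rule has_field_derivative_transform_within_open[OF _ open_int])
       (use assms in \<open>auto simp: moment1\<close>)
  have eq: "(\<Sum>n. diffs (\<lambda>n. real n * aa n) n * t ^ n) = exp (K 0 t) * ?D0 * K 1 t + ?D1 * exp (K 0 t)"
    using DERIV_unique[OF d1 d2] .
  have "(\<Sum>n. (real n * (real n * aa n)) * t ^ n) = t * (\<Sum>n. diffs (\<lambda>n. real n * aa n) n * t ^ n)"
    by (rule mult_n_sums[OF aa_mult_summable assms, symmetric])
  also have "\<dots> = exp (K 0 t) * (t * ?D0) * K 1 t + exp (K 0 t) * (t * ?D1)"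
    by (subst eq) (simp add: algebra_simps)
  also have "\<dots> = exp (K 0 t) * (K 1 t ^ 2 + K 2 t)"
    by (subst K_deriv(2)[OF assms])+ (simp add: power2_eq_square numeral_2_eq_2 algebra_simps)
  finally show ?thesis .
qed

lemma khin_mean_eq:
  assumes "\<bar>t\<bar> < 1"
  shows "khin_mean aa t = K 1 t"
proof -
  have "(\<lambda>n. (real n * aa n) * t ^ n) sums (exp (K 0 t) * K 1 t)"
    using summable_sums[OF aa_mult_summable[OF assms]] moment1[OF assms] by simp
  hence "(\<lambda>n. (real n * aa n) * t ^ n / exp (K 0 t)) sums (exp (K 0 t) * K 1 t / exp (K 0 t))"
    by (rule sums_divide)
  hence "(\<lambda>n. real n * (aa n * t ^ n / ps_val aa t)) sums K 1 t"
    by (simp add: ps_val_eq[OF assms] mult.assoc)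
  thus ?thesis unfolding khin_mean_def by (simp add: sums_iff)
qed

lemma khin_var_eq:
  assumes "\<bar>t\<bar> < 1"
  shows "khin_var aa t = K 2 t"
proof -
  define m where "m = K 1 t"
  define F where "F = exp (K 0 t)"
  have F: "F > 0" by (simp add: F_def)
  have s0: "(\<lambda>n. aa n * t ^ n) sums F" unfolding F_def by (rule aa_real_sums[OF assms])
  have s1: "(\<lambda>n. (real n * aa n) * t ^ n) sums (F * m)"
    using summable_sums[OF aa_mult_summable[OF assms]] moment1[OF assms] by (simp add: F_def m_def)
  have s2: "(\<lambda>n. (real n * (real n * aa n)) * t ^ n) sums (F * (m ^ 2 + K 2 t))"
    using summable_sums[OF aa_mult2_summable[OF assms]] moment2[OF assms] by (simp add: F_def m_def)
  have "(\<lambda>n. ((real n * (real n * aa n)) * t ^ n - 2 * m * ((real n * aa n) * t ^ n) + m ^ 2 * (aa n * t ^ n)) / F)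
        sums ((F * (m ^ 2 + K 2 t) - 2 * m * (F * m) + m ^ 2 * F) / F)"
    by (intro sums_divide sums_add sums_diff sums_mult s0 s1 s2)
  moreover have "(F * (m ^ 2 + K 2 t) - 2 * m * (F * m) + m ^ 2 * F) / F = K 2 t"
    using F by (simp add: field_simps power2_eq_square)
  moreover have "((real n * (real n * aa n)) * t ^ n - 2 * m * ((real n * aa n) * t ^ n) + m ^ 2 * (aa n * t ^ n)) / F
      = (real n - m)\<^sup>2 * (aa n * t ^ n / ps_val aa t)" for n
    using F by (simp add: ps_val_eq[OF assms] F_def[symmetric] field_simps power2_eq_square)
  ultimately have "(\<lambda>n. (real n - m)\<^sup>2 * (aa n * t ^ n / ps_val aa t)) sums K 2 t" by simp
  thus ?thesis unfolding khin_var_def khin_mean_eq[OF assms] m_def by (simp add: sums_iff)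
qed

lemma choose3: "6 * ((n + 3) choose 3) = (n + 1) * (n + 2) * (n + 3)"
proof -
  define C where "C = (n + 3) choose 3"
  have h: "fact 3 * fact n * C = fact (n + 3)"
    unfolding C_def using binomial_fact_lemma[of 3 "n+3"] by simp
  have f: "fact (n + 3) = (n + 1) * (n + 2) * (n + 3) * (fact n :: nat)"
    by (simp add: numeral_3_eq_3 algebra_simps)
  have f3: "fact 3 = (6::nat)" by (simp add: numeral_3_eq_3)
  from h f f3 have "(6 * C) * fact n = ((n + 1) * (n + 2) * (n + 3)) * fact n"
    by (simp add: algebra_simps)
  hence "6 * C = (n + 1) * (n + 2) * (n + 3)" by simp
  thus ?thesis by (simp only: C_def)
qed

lemma choose4: "24 * ((n + 4) choose 4) = (n + 1) * (n + 2) * (n + 3) * (n + 4)"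
proof -
  define C where "C = (n + 4) choose 4"
  have h: "fact 4 * fact n * C = fact (n + 4)"
    unfolding C_def using binomial_fact_lemma[of 4 "n+4"] by simp
  have f: "fact (n + 4) = (n + 1) * (n + 2) * (n + 3) * (n + 4) * (fact n :: nat)"
    by (simp add: numeral_eq_Suc algebra_simps)
  have f3: "fact 4 = (24::nat)" by (simp add: numeral_eq_Suc)
  from h f f3 have "(24 * C) * fact n = ((n + 1) * (n + 2) * (n + 3) * (n + 4)) * fact n"
    by (simp add: algebra_simps)
  hence "24 * C = (n + 1) * (n + 2) * (n + 3) * (n + 4)" by simp
  thus ?thesis by (simp only: C_def)
qed

lemma K2_lower:
  assumes "0 \<le> t" "t < 1"
  shows "(1 / (1 - t) ^ 4 - 1) / 4 \<le> K 2 t"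
proof -
  have at: "\<bar>t\<bar> < 1" using assms by simp
  have trm: "real ((n + 3) choose 3) * t ^ n \<le> 4 * (real n ^ 2 * cc n * t ^ n) + (if n = 0 then 1 else 0)" for n
  proof (cases "n = 0")
    case True then show ?thesis by simp
  next
    case False
    hence n1: "n \<ge> 1" by simp
    have "(n + 1) * (n + 2) * (n + 3) \<le> (2 * n) * (3 * n) * (4 * n)"
      using n1 by (intro mult_le_mono) auto
    hence "6 * ((n + 3) choose 3) \<le> 24 * n ^ 3" by (simp only: choose3) (simp add: power3_eq_cube algebra_simps)
    hence "real (6 * ((n + 3) choose 3)) \<le> real (24 * n ^ 3)" by (simp only: of_nat_le_iff)
    hence "real ((n + 3) choose 3) \<le> 4 * real n ^ 3" by (simp only: of_nat_mult of_nat_power of_nat_numeral)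
    also have "\<dots> \<le> 4 * (real n ^ 2 * cc n)"
      using cc_lower[OF n1] by (simp add: power3_eq_cube power2_eq_square mult_left_mono)
    finally have "real ((n + 3) choose 3) * t ^ n \<le> 4 * (real n ^ 2 * cc n) * t ^ n"
      using assms by (intro mult_right_mono) auto
    thus ?thesis using False by (simp add: algebra_simps)
  qed
  have s1: "(\<lambda>n. real ((n + 3) choose 3) * t ^ n) sums (1 / (1 - t) ^ 4)"
  proof -
    have e: "Suc 3 = (4::nat)" by simp
    show ?thesis using choose_series[OF assms, of 3] unfolding e .
  qed
  have s2: "(\<lambda>n. 4 * (real n ^ 2 * cc n * t ^ n) + (if n = 0 then 1 else 0)) sums (4 * K 2 t + 1)"
    by (intro sums_add sums_mult K_sums[OF at]) (rule sums_single[of 0 "\<lambda>_. 1::real", simplified])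
  have "1 / (1 - t) ^ 4 \<le> 4 * K 2 t + 1"
    using sums_le[OF trm s1 s2] .
  thus ?thesis by simp
qed

lemma K3_upper:
  assumes "0 \<le> t" "t < 1"
  shows "K 3 t \<le> 48 / (1 - t) ^ 5"
proof -
  have at: "\<bar>t\<bar> < 1" using assms by simp
  have trm: "real n ^ 3 * cc n * t ^ n \<le> 48 * (real ((n + 4) choose 4) * t ^ n)" for n
  proof -
    have "n * n * n * n \<le> (n + 1) * (n + 2) * (n + 3) * (n + 4)"
      by (intro mult_le_mono) auto
    hence "n ^ 4 \<le> 24 * ((n + 4) choose 4)" by (simp only: choose4) (simp add: power4_eq_xxxx)
    hence "real (n ^ 4) \<le> real (24 * ((n + 4) choose 4))" by (simp only: of_nat_le_iff)
    hence r: "real n ^ 4 \<le> 24 * real ((n + 4) choose 4)" by (simp only: of_nat_mult of_nat_power of_nat_numeral)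
    have "real n ^ 3 * cc n \<le> real n ^ 3 * (2 * real n)"
      by (intro mult_left_mono cc_upper) auto
    also have "\<dots> = 2 * real n ^ 4" by (simp add: power3_eq_cube power4_eq_xxxx)
    also have "\<dots> \<le> 48 * real ((n + 4) choose 4)" using r by simp
    finally show ?thesis using assms by (simp add: mult.assoc[symmetric] mult_right_mono)
  qed
  have s1: "(\<lambda>n. 48 * (real ((n + 4) choose 4) * t ^ n)) sums (48 * (1 / (1 - t) ^ 5))"
  proof -
    have e: "Suc 4 = (5::nat)" by simp
    show ?thesis using sums_mult[OF choose_series[OF assms, of 4], of 48] unfolding e .
  qed
  from sums_le[OF trm K_sums[OF at] s1] show ?thesis by simp
qed

lemma bound_lim: "((\<lambda>t::real. sqrt ((48 / (1 - t) ^ 5) ^ 2 / ((1 / (1 - t) ^ 4 - 1) / 4) ^ 3)) \<longlongrightarrow> 0) (at_left 1)"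
proof -
  have "((\<lambda>t::real. (48 / (1 - t) ^ 5) ^ 2 / ((1 / (1 - t) ^ 4 - 1) / 4) ^ 3) \<longlongrightarrow> 0) (at_left 1)"
    by real_asymp
  from tendsto_real_sqrt[OF this] show ?thesis by simp
qed

definition Q :: "real \<Rightarrow> real" where "Q t = K 3 t / sqrt (K 2 t) ^ 3"

lemma Q_lim: "(Q \<longlongrightarrow> 0) (at_left 1)"
proof (rule Lim_null_comparison[OF _ bound_lim])
  have "eventually (\<lambda>t::real. 0 < t \<and> t < 1) (at_left 1)"
    by (intro eventually_at_leftI[of 0]) auto
  thus "\<forall>\<^sub>F t in at_left 1. norm (Q t) \<le> sqrt ((48 / (1 - t) ^ 5) ^ 2 / ((1 / (1 - t) ^ 4 - 1) / 4) ^ 3)"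
  proof eventually_elim
    case (elim t)
    hence t: "0 \<le> t" "t < 1" by auto
    let ?L = "(1 / (1 - t) ^ 4 - 1) / 4" and ?U = "48 / (1 - t) ^ 5"
    have "(1 - t) ^ 4 < 1" using elim by (simp add: power_less_one_iff)
    hence "1 < 1 / (1 - t) ^ 4" using elim by (simp add: field_simps)
    hence L0: "0 < ?L" by simp
    have L: "?L \<le> K 2 t" by (rule K2_lower[OF t])
    have U: "K 3 t \<le> ?U" by (rule K3_upper[OF t])
    have K3: "0 \<le> K 3 t" by (rule K_nonneg[OF t])
    have K2: "0 < K 2 t" using L0 L by linarith
    have Q0: "0 \<le> Q t" unfolding Q_def using K3 K2 by simp
    have s6: "sqrt (K 2 t) ^ 6 = K 2 t ^ 3"
    proof -
      have "sqrt (K 2 t) ^ 6 = (sqrt (K 2 t) ^ 2) ^ 3" by (simp flip: power_mult)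
      thus ?thesis using K2 by simp
    qed
    have "Q t ^ 2 = K 3 t ^ 2 / sqrt (K 2 t) ^ 6"
      unfolding Q_def by (simp add: power_divide flip: power_mult)
    also have "\<dots> = K 3 t ^ 2 / K 2 t ^ 3" by (simp only: s6)
    also have "\<dots> \<le> ?U ^ 2 / ?L ^ 3"
      using K3 U L L0 by (intro frac_le power_mono) auto
    finally have "Q t \<le> sqrt (?U ^ 2 / ?L ^ 3)" by (rule real_le_rsqrt)
    thus ?case using Q0 by simp
  qed
qed

definition pp :: "real \<Rightarrow> nat \<Rightarrow> real" where "pp t n = aa n * t ^ n / ps_val aa t"
definition M0 :: "real \<Rightarrow> nat measure" where "M0 t = density (count_space UNIV) (\<lambda>n. ennreal (pp t n))"
definition XX :: "real \<Rightarrow> nat \<Rightarrow> real" where "XX t n = (real n - khin_mean aa t) / sqrt (khin_var aa t)"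
definition mu :: "real \<Rightarrow> real measure" where "mu t = distr (M0 t) borel (XX t)"

lemma ps_pos: "\<bar>t\<bar> < 1 \<Longrightarrow> ps_val aa t > 0" by (simp add: ps_val_eq)

lemma pp_sums: "\<bar>t\<bar> < 1 \<Longrightarrow> pp t sums 1"
  using sums_divide[OF aa_real_sums[of t], of "ps_val aa t"] ps_val_eq[of t] unfolding pp_def by simp

lemma pp_nonneg: "0 \<le> t \<Longrightarrow> t < 1 \<Longrightarrow> 0 \<le> pp t n"
  unfolding pp_def using ps_pos[of t] aa_nonneg[of n] by simp

lemma space_M0 [simp]: "space (M0 t) = UNIV" by (simp add: M0_def)
lemma sets_M0 [simp]: "sets (M0 t) = UNIV" by (simp add: M0_def)

lemma M0_prob: assumes "0 \<le> t" "t < 1" shows "prob_space (M0 t)"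
proof (rule prob_spaceI)
  have "emeasure (M0 t) (space (M0 t)) = (\<integral>\<^sup>+ n. ennreal (pp t n) \<partial>count_space UNIV)"
    unfolding M0_def by (simp add: emeasure_density)
  also have "\<dots> = (\<Sum>n. ennreal (pp t n))" by (rule nn_integral_count_space_nat)
  also have "\<dots> = ennreal 1"
    by (rule suminf_ennreal_eq[OF pp_nonneg pp_sums]) (use assms in auto)
  finally show "emeasure (M0 t) (space (M0 t)) = 1" by simp
qed

lemma XX_meas: "XX t \<in> borel_measurable (M0 t)"
  by (simp add: measurable_def)

lemma mu_real: assumes "0 \<le> t" "t < 1" shows "real_distribution (mu t)"
  unfolding mu_def by (rule prob_space.real_distribution_distr[OF M0_prob[OF assms] XX_meas])

lemma integral_M0:
  fixes f :: "nat \<Rightarrow> 'b::{banach, second_countable_topology}"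
  assumes "0 \<le> t" "t < 1" "\<And>n. norm (f n) \<le> 1"
  shows "(\<lambda>n. pp t n *\<^sub>R f n) sums integral\<^sup>L (M0 t) f"
proof -
  have "integral\<^sup>L (M0 t) f = integral\<^sup>L (count_space UNIV) (\<lambda>n. pp t n *\<^sub>R f n)"
    unfolding M0_def by (rule integral_density) (use pp_nonneg assms in auto)
  moreover have "integrable (count_space UNIV) (\<lambda>n. pp t n *\<^sub>R f n)"
  proof (subst integrable_count_space_nat_iff)
    show "summable (\<lambda>n. norm (pp t n *\<^sub>R f n))"
    proof (rule summable_comparison_test[OF _ sums_summable[OF pp_sums]])
      show "\<exists>N. \<forall>n\<ge>N. norm (norm (pp t n *\<^sub>R f n)) \<le> pp t n"
        using pp_nonneg[OF assms(1,2)] assms(3) by (auto intro!: mult_left_le)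
    qed (use assms in auto)
  qed
  ultimately show ?thesis using sums_integral_count_space_nat by metis
qed

lemma cdf_mu:
  assumes "0 \<le> t" "t < 1"
  shows "cdf (mu t) x = khin_norm_cdf aa t x"
proof -
  have "cdf (mu t) x = measure (M0 t) (XX t -` {..x})"
    unfolding cdf_def mu_def by (subst measure_distr) (auto simp: XX_meas)
  also have "\<dots> = integral\<^sup>L (M0 t) (indicator (XX t -` {..x}))"
    by simp
  also have "\<dots> = (\<Sum>n. pp t n *\<^sub>R (indicator (XX t -` {..x}) n :: real))"
  proof -
    have "(\<lambda>n. pp t n *\<^sub>R (indicator (XX t -` {..x}) n :: real)) sums integral\<^sup>L (M0 t) (indicator (XX t -` {..x}))"
      by (rule integral_M0[OF assms]) (simp add: indicator_def)
    thus ?thesis by (simp add: sums_iff)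
  qed
  also have "\<dots> = khin_norm_cdf aa t x"
    unfolding khin_norm_cdf_def XX_def pp_def by (intro suminf_cong) (auto simp: indicator_def)
  finally show ?thesis .
qed

lemma char_mu:
  assumes "0 \<le> t" "t < 1"
  shows "(\<lambda>n. pp t n *\<^sub>R iexp (\<theta> * XX t n)) sums char (mu t) \<theta>"
proof -
  have "char (mu t) \<theta> = integral\<^sup>L (M0 t) (\<lambda>n. iexp (\<theta> * XX t n))"
    unfolding char_def mu_def by (subst integral_distr) (auto simp: XX_meas)
  thus ?thesis using integral_M0[OF assms, of "\<lambda>n. iexp (\<theta> * XX t n)"] by (simp add: norm_exp_i_times)
qed

definition ST :: "real \<Rightarrow> real \<Rightarrow> nat \<Rightarrow> complex" where
  "ST t \<theta> n = complex_of_real (cc n * t ^ n) *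
      (exp (\<i> * of_real (real n * (\<theta> / sqrt (K 2 t)))) - 1 - \<i> * of_real (real n * (\<theta> / sqrt (K 2 t))))"

definition SS :: "real \<Rightarrow> real \<Rightarrow> complex" where "SS t \<theta> = (\<Sum>n. ST t \<theta> n)"

lemma zpow: "(complex_of_real t * exp (\<i> * of_real u)) ^ n = of_real (t ^ n) * exp (\<i> * of_real (real n * u))"
proof -
  have e: "\<i> * complex_of_real (real n * u) = of_nat n * (\<i> * of_real u)" by simp
  show ?thesis by (simp only: e exp_of_nat_mult power_mult_distrib of_real_power)
qed

lemma norm_sums_le:
  fixes f :: "nat \<Rightarrow> complex"
  assumes "f sums a" "g sums b" "\<And>n. norm (f n) \<le> g n"
  shows "norm a \<le> b"
proof -
  have sg: "summable g" using assms(2) by (simp add: sums_iff)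
  have sn: "summable (\<lambda>n. norm (f n))"
    by (rule summable_comparison_test[OF _ sg]) (use assms(3) in auto)
  have "norm a = norm (suminf f)" using assms(1) by (simp add: sums_iff)
  also have "\<dots> \<le> (\<Sum>n. norm (f n))" by (rule summable_norm[OF sn])
  also have "\<dots> \<le> suminf g" by (rule suminf_le[OF assms(3) sn sg])
  also have "\<dots> = b" using assms(2) by (simp add: sums_iff)
  finally show ?thesis .
qed

lemma SS_sums:
  fixes t \<theta> :: real
  assumes "0 < t" "t < 1"
  defines "u \<equiv> \<theta> / sqrt (K 2 t)"
  defines "z \<equiv> complex_of_real t * exp (\<i> * of_real u)"
  shows "ST t \<theta> sums (Lc z - of_real (K 0 t) - \<i> * of_real u * of_real (K 1 t))"
proof -
  have at: "\<bar>t\<bar> < 1" using assms by simp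
  have nz: "norm z < 1" using assms by (simp add: z_def norm_mult)
  have s1: "(\<lambda>n. complex_of_real (cc n * t ^ n) * exp (\<i> * of_real (real n * u))) sums Lc z"
    using Lc_sums[OF nz] by (simp add: z_def zpow mult.assoc)
  have s2: "(\<lambda>n. complex_of_real (cc n * t ^ n)) sums of_real (K 0 t)"
    using sums_of_real[OF K_sums[OF at, of 0]] by simp
  have s3: "(\<lambda>n. (\<i> * of_real u) * complex_of_real (real n ^ 1 * cc n * t ^ n)) sums ((\<i> * of_real u) * of_real (K 1 t))"
    by (intro sums_mult sums_of_real K_sums[OF at])
  have "(\<lambda>n. complex_of_real (cc n * t ^ n) * exp (\<i> * of_real (real n * u)) - complex_of_real (cc n * t ^ n)
      - (\<i> * of_real u) * complex_of_real (real n ^ 1 * cc n * t ^ n)) sums (Lc z - of_real (K 0 t) - (\<i> * of_real u) * of_real (K 1 t))"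
    by (intro sums_diff s1 s2 s3)
  moreover have "complex_of_real (cc n * t ^ n) * exp (\<i> * of_real (real n * u)) - complex_of_real (cc n * t ^ n)
      - (\<i> * of_real u) * complex_of_real (real n ^ 1 * cc n * t ^ n) = ST t \<theta> n" for n
    unfolding ST_def u_def[symmetric] by (simp add: algebra_simps)
  ultimately show ?thesis by simp
qed

lemma char_SS:
  assumes "0 < t" "t < 1"
  shows "char (mu t) \<theta> = exp (SS t \<theta>)"
proof -
  define u where "u = \<theta> / sqrt (K 2 t)"
  define z where "z = complex_of_real t * exp (\<i> * of_real u)"
  define W where "W = exp (- (\<i> * of_real u * of_real (K 1 t))) / of_real (exp (K 0 t))"
  have at: "\<bar>t\<bar> < 1" using assms by simp
  have nz: "norm z < 1" using assms by (simp add: z_def norm_mult)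
  have s: "(\<lambda>n. complex_of_real (aa n) * z ^ n * W) sums (macmahon z * W)"
    by (rule sums_mult2[OF aa_sums[OF nz]])
  have eq: "pp t n *\<^sub>R iexp (\<theta> * XX t n) = complex_of_real (aa n) * z ^ n * W" for n
  proof -
    have x: "\<theta> * XX t n = real n * u - K 1 t * u"
      unfolding XX_def khin_mean_eq[OF at] khin_var_eq[OF at] u_def by (simp add: right_diff_distrib diff_divide_distrib mult.commute)
    have "iexp (\<theta> * XX t n) = exp (\<i> * of_real (real n * u)) * exp (- (\<i> * of_real u * of_real (K 1 t)))"
      unfolding x by (simp add: exp_add[symmetric] algebra_simps)
    moreover have "pp t n = aa n * t ^ n / exp (K 0 t)" by (simp add: pp_def ps_val_eq[OF at])
    ultimately show ?thesis
      by (simp add: z_def zpow W_def scaleR_conv_of_real)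
  qed
  have fe: "(\<lambda>n. pp t n *\<^sub>R iexp (\<theta> * XX t n)) = (\<lambda>n. complex_of_real (aa n) * z ^ n * W)"
    by (rule ext) (rule eq)
  have "(\<lambda>n. complex_of_real (aa n) * z ^ n * W) sums char (mu t) \<theta>"
    using char_mu[of t \<theta>] assms unfolding fe by simp
  hence "char (mu t) \<theta> = macmahon z * W" using s sums_unique2 by blast
  also have "\<dots> = exp (Lc z - of_real (K 0 t) - \<i> * of_real u * of_real (K 1 t))"
    by (simp add: macmahon_eq[OF nz] W_def exp_diff exp_of_real[symmetric] exp_minus field_simps exp_add)
  also have "Lc z - of_real (K 0 t) - \<i> * of_real u * of_real (K 1 t) = SS t \<theta>"
    using SS_sums[OF assms, of \<theta>] unfolding u_def z_def SS_def by (simp add: sums_iff)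
  finally show ?thesis .
qed

lemma iexp_approx2':
  "cmod (iexp x - (1 + \<i> * complex_of_real x - complex_of_real (x^2/2))) \<le> \<bar>x\<bar>^3 / 6"
proof -
  have e: "(\<Sum>k\<le>2. (\<i> * complex_of_real x) ^ k / fact k) = 1 + \<i> * x - x^2/2"
    by (simp add: numeral_2_eq_2 power2_eq_square algebra_simps)
  have f: "fact (Suc 2) = (6::real)" by (simp add: numeral_eq_Suc)
  from iexp_approx1[of x 2] show ?thesis unfolding e f by (simp add: numeral_eq_Suc)
qed

lemma K2_pos: "0 < t \<Longrightarrow> t < 1 \<Longrightarrow> 0 < K 2 t"
proof -
  assume t: "0 < t" "t < 1"
  have "(1 - t) ^ 4 < 1" using t by (simp add: power_less_one_iff)
  hence "1 < 1 / (1 - t) ^ 4" using t by (simp add: field_simps)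
  hence "0 < (1 / (1 - t) ^ 4 - 1) / 4" by simp
  also have "(1 / (1 - t) ^ 4 - 1) / 4 \<le> K 2 t" by (rule K2_lower) (use t in auto)
  finally show ?thesis .
qed

lemma SS_bound:
  assumes "0 < t" "t < 1"
  shows "norm (SS t \<theta> + complex_of_real (\<theta>^2/2)) \<le> \<bar>\<theta>\<bar>^3/6 * Q t"
proof -
  define u where "u = \<theta> / sqrt (K 2 t)"
  have at: "\<bar>t\<bar> < 1" using assms by simp
  have K2: "0 < K 2 t" by (rule K2_pos[OF assms])
  have uK: "u^2 * K 2 t = \<theta>^2" using K2 by (simp add: u_def power_divide)
  have s1: "ST t \<theta> sums SS t \<theta>"
    unfolding SS_def using SS_sums[OF assms, of \<theta>] by (simp add: sums_iff)
  have s2: "(\<lambda>n. complex_of_real (u^2/2) * complex_of_real (real n ^ 2 * cc n * t ^ n)) sums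
      (complex_of_real (u^2/2) * complex_of_real (K 2 t))"
    by (intro sums_mult sums_of_real K_sums[OF at])
  have s3: "(\<lambda>n. \<bar>u\<bar>^3/6 * (real n ^ 3 * cc n * t ^ n)) sums (\<bar>u\<bar>^3/6 * K 3 t)"
    by (intro sums_mult K_sums[OF at])
  have A: "norm (SS t \<theta> + complex_of_real (u^2/2) * complex_of_real (K 2 t)) \<le> \<bar>u\<bar>^3/6 * K 3 t"
  proof (rule norm_sums_le[OF sums_add[OF s1 s2] s3])
    fix n
    have "ST t \<theta> n + complex_of_real (u^2/2) * complex_of_real (real n ^ 2 * cc n * t ^ n) =
       complex_of_real (cc n * t ^ n) * (iexp (real n * u) - (1 + \<i> * complex_of_real (real n * u) - complex_of_real ((real n * u)^2/2)))"
      unfolding ST_def u_def[symmetric] by (simp add: algebra_simps power2_eq_square)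
    also have "norm \<dots> = (cc n * t ^ n) * cmod (iexp (real n * u) - (1 + \<i> * complex_of_real (real n * u) - complex_of_real ((real n * u)^2/2)))"
      using cc_nonneg[of n] assms by (simp only: norm_mult norm_of_real abs_of_nonneg[OF mult_nonneg_nonneg[OF cc_nonneg zero_le_power[of t n]]])
    also have "\<dots> \<le> (cc n * t ^ n) * (\<bar>real n * u\<bar>^3 / 6)"
      by (intro mult_left_mono iexp_approx2') (use cc_nonneg[of n] assms in auto)
    also have "\<dots> = \<bar>u\<bar>^3/6 * (real n ^ 3 * cc n * t ^ n)"
      by (simp add: abs_mult power_mult_distrib)
    finally show "norm (ST t \<theta> n + complex_of_real (u^2/2) * complex_of_real (real n ^ 2 * cc n * t ^ n)) \<le> \<bar>u\<bar>^3/6 * (real n ^ 3 * cc n * t ^ n)" .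
  qed
  have B: "complex_of_real (u^2/2) * complex_of_real (K 2 t) = complex_of_real (\<theta>^2/2)"
  proof -
    have "complex_of_real (u^2/2) * complex_of_real (K 2 t) = complex_of_real (u^2/2 * K 2 t)"
      by (simp only: of_real_mult)
    also have "u^2/2 * K 2 t = \<theta>^2/2" using uK by simp
    finally show ?thesis .
  qed
  have C: "\<bar>u\<bar>^3/6 * K 3 t = \<bar>\<theta>\<bar>^3/6 * Q t"
    using K2 by (simp add: u_def Q_def abs_div power_divide)
  show ?thesis using A unfolding B C .
qed

lemma char_lim: "((\<lambda>t. char (mu t) \<theta>) \<longlongrightarrow> char std_normal_distribution \<theta>) (at_left 1)"
proof -
  have ev: "eventually (\<lambda>t::real. 0 < t \<and> t < 1) (at_left 1)"
    by (intro eventually_at_leftI[of 0]) auto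
  have "((\<lambda>t. SS t \<theta> + complex_of_real (\<theta>^2/2)) \<longlongrightarrow> 0) (at_left 1)"
  proof (rule Lim_null_comparison)
    show "\<forall>\<^sub>F t in at_left 1. norm (SS t \<theta> + complex_of_real (\<theta>^2/2)) \<le> \<bar>\<theta>\<bar>^3/6 * Q t"
      using ev by eventually_elim (rule SS_bound, auto)
    show "((\<lambda>t. \<bar>\<theta>\<bar>^3/6 * Q t) \<longlongrightarrow> 0) (at_left 1)"
      by (rule tendsto_mult_right_zero[OF Q_lim])
  qed
  hence "((\<lambda>t. (SS t \<theta> + complex_of_real (\<theta>^2/2)) - complex_of_real (\<theta>^2/2)) \<longlongrightarrow> 0 - complex_of_real (\<theta>^2/2)) (at_left 1)"
    by (intro tendsto_diff tendsto_const)
  hence "((\<lambda>t. exp (SS t \<theta>)) \<longlongrightarrow> exp (- complex_of_real (\<theta>^2/2))) (at_left 1)"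
    by (intro tendsto_exp) simp
  moreover have "exp (- complex_of_real (\<theta>^2/2)) = char std_normal_distribution \<theta>"
    by (simp add: char_std_normal_distribution exp_of_real[symmetric])
  ultimately have lim: "((\<lambda>t. exp (SS t \<theta>)) \<longlongrightarrow> char std_normal_distribution \<theta>) (at_left 1)"
    by simp
  have ev2: "eventually (\<lambda>t. exp (SS t \<theta>) = char (mu t) \<theta>) (at_left 1)"
    using ev by eventually_elim (simp add: char_SS)
  show ?thesis by (rule tendsto_cong[OF ev2, THEN iffD1, OF lim])
qed

lemma std_cdf_eq: "cdf std_normal_distribution x = std_normal_cdf x"
proof -
  have "cdf std_normal_distribution x = integral\<^sup>L std_normal_distribution (indicator {..x})"
    by (simp add: cdf_def)
  also have "\<dots> = integral\<^sup>L lborel (\<lambda>y. std_normal_density y *\<^sub>R (indicator {..x} y :: real))"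
    by (rule integral_density) auto
  also have "\<dots> = std_normal_cdf x"
    unfolding std_normal_cdf_def set_lebesgue_integral_def by (simp add: mult.commute)
  finally show ?thesis .
qed

lemma std_isCont: "isCont (cdf std_normal_distribution) x"
proof -
  have "AE y in lborel. ennreal (std_normal_density y) * indicator {x} y = 0"
    using AE_lborel_singleton[of x] by eventually_elim simp
  hence "emeasure std_normal_distribution {x} = 0"
    by (simp add: emeasure_density nn_integral_cong_AE)
  hence "measure std_normal_distribution {x} = 0" by (simp add: measure_def)
  thus ?thesis by (simp add: finite_borel_measure.isCont_cdf[OF real_distribution.finite_borel_measure_M[OF real_dist_normal_dist]])
qed

lemma cdf_lim: "((\<lambda>t. khin_norm_cdf aa t x) \<longlongrightarrow> std_normal_cdf x) (at_left 1)"
proof (rule tendsto_at_left_sequentially[of 0])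
  fix S :: "nat \<Rightarrow> real"
  assume S1: "\<And>n. S n < 1" and S0: "\<And>n. 0 < S n" and "incseq S" and Sl: "S \<longlonglongrightarrow> 1"
  have rd: "real_distribution (mu (S n))" for n using S0[of n] S1[of n] by (intro mu_real) auto
  have filt: "filterlim S (at_left 1) sequentially"
    by (rule tendsto_imp_filterlim_at_left[OF Sl]) (use S1 in auto)
  have cc: "(\<lambda>n. char (mu (S n)) \<theta>) \<longlonglongrightarrow> char std_normal_distribution \<theta>" for \<theta>
    by (rule filterlim_compose[OF char_lim filt])
  have "weak_conv_m (\<lambda>n. mu (S n)) std_normal_distribution"
    by (rule levy_continuity[OF rd real_dist_normal_dist cc])
  hence "(\<lambda>n. cdf (mu (S n)) x) \<longlonglongrightarrow> cdf std_normal_distribution x"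
    unfolding weak_conv_m_def weak_conv_def using std_isCont by blast
  moreover have "cdf (mu (S n)) x = khin_norm_cdf aa (S n) x" for n
    using S0[of n] S1[of n] by (intro cdf_mu) auto
  ultimately show "(\<lambda>n. khin_norm_cdf aa (S n) x) \<longlonglongrightarrow> std_normal_cdf x"
    by (simp add: std_cdf_eq)
qed simp

theorem mainTheorem10:
  shows "\<exists>a :: nat \<Rightarrow> real.
           (\<forall>z::complex. norm z < 1 \<longrightarrow>
              (\<lambda>j. inverse ((1 - z ^ Suc j) ^ Suc j)) has_prod macmahon z \<and>
              (\<lambda>n. complex_of_real (a n) * z ^ n) sums macmahon z)
         \<and> in_class_K a \<and> conv_radius a = 1 \<and> gaussian a"
proof (intro exI[of _ aa] conjI allI impI)
  fix z :: complex assume z: "norm z < 1"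
  show "(\<lambda>j. inverse ((1 - z ^ Suc j) ^ Suc j)) has_prod macmahon z"
    using prod_Lc[OF z] macmahon_eq[OF z] by simp
  show "(\<lambda>n. complex_of_real (aa n) * z ^ n) sums macmahon z" by (rule aa_sums[OF z])
next
  show K: "in_class_K aa"
    unfolding in_class_K_def
  proof (intro conjI allI exI[of _ 1])
    show "0 \<le> aa n" for n by (rule aa_nonneg)
    show "0 < aa 0" by (simp add: aa_0)
    show "aa 1 \<noteq> 0" using aa_ge1[of 1] by simp
    show "conv_radius aa > 0" by (simp add: aa_radius)
  qed simp
  show "conv_radius aa = 1" by (rule aa_radius)
  have tr: "to_radius aa = at_left 1" by (simp add: to_radius_def aa_radius)
  show "gaussian aa"
    unfolding gaussian_def tr using K cdf_lim by blast
qed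

end
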